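(* Let $\mathbb{K}\in\{\mathbb{R},\mathbb{C}\}$, $\mathbf{R}_U\in\mathbb{K}^{n\times n}$ self-adjoint positive definite, $U:=\mathbb{K}^n$ with $\langle\mathbf{x},\mathbf{y}\rangle_U:=\langle\mathbf{R}_U\mathbf{x},\mathbf{y}\rangle$ and norm $\|\cdot\|_U$. Fix $\mu$, $\mathbf{A}(\mu)\in\mathbb{K}^{n\times n}$, $\mathbf{u}(\mu)\in U$, a subspace $U_r\subseteq U$ of dimension $r$ with basis matrix $\mathbf{U}_r\in\mathbb{K}^{n\times r}$, and $\mathbf{\Theta}\in\mathbb{K}^{k\times n}$. Define $\|\mathbf{y}\|_{U_r'}^{\mathbf{\Theta}}:=\max_{\mathbf{x}\in U_r\setminus\{\mathbf{0}\}}|\langle\mathbf{\Theta}\mathbf{R}_U^{-1}\mathbf{y},\mathbf{\Theta}\mathbf{x}\rangle|/\|\mathbf{\Theta}\mathbf{x}\|$, $\alpha_r^{\mathbf{\Theta}}(\mu):=\min_{\mathbf{x}\in U_r\setminus\{\mathbf{0}\}}\|\mathbf{A}(\mu)\mathbf{x}\|_{U_r'}^{\mathbf{\Theta}}/\|\mathbf{x}\|_U$ and $\beta_r^{\mathbf{\Theta}}(\mu):=\max_{\mathbf{x}\in(\mathrm{span}\{\mathbf{u}(\mu)\}+U_r)\setminus\{\mathbf{0}\}}\|\mathbf{A}(\mu)\mathbf{x}\|_{U_r'}^{\mathbf{\Theta}}/\|\mathbf{x}\|_U$. Suppose that for some $\varepsilon\in[0,1)$, $|\langle\mathbf{x},\mathbf{y}\rangle_U-\langle\mathbf{\Theta}\mathbf{x},\mathbf{\Theta}\mathbf{y}\rangle|\le\varepsilon\|\mathbf{x}\|_U\|\mathbf{y}\|_U$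 for all $\mathbf{x},\mathbf{y}\in U_r$, and that $\mathbf{U}_r$ is orthogonal with respect to $\langle\mathbf{x},\mathbf{y}\rangle_U^{\mathbf{\Theta}}:=\langle\mathbf{\Theta}\mathbf{x},\mathbf{\Theta}\mathbf{y}\rangle$, i.e., $(\mathbf{\Theta}\mathbf{U}_r)^{\mathrm{H}}\mathbf{\Theta}\mathbf{U}_r=\mathbf{I}$. Then the condition number of $\mathbf{A}_r(\mu):=\mathbf{U}_r^{\mathrm{H}}\mathbf{\Theta}^{\mathrm{H}}\mathbf{\Theta}\mathbf{R}_U^{-1}\mathbf{A}(\mu)\mathbf{U}_r\in\mathbb{K}^{r\times r}$ is bounded by $\sqrt{\frac{1+\varepsilon}{1-\varepsilon}}\,\frac{\beta_r^{\mathbf{\Theta}}(\mu)}{\alpha_r^{\mathbf{\Theta}}(\mu)}$.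
   Context: $\langle\mathbf{x},\mathbf{y}\rangle=\mathbf{x}^{\mathrm{H}}\mathbf{y}$ is the canonical inner product and $\|\cdot\|$ the Euclidean norm. The condition number of a square matrix is the ratio of its largest to smallest singular value. *)

theory Defs
  imports "HOL-Analysis.Analysis"
begin

text \<open>Scalar field K in {R, C}: a conjugation operation, identity on real, cnj on complex.\<close>
class rcl = real_normed_field +
  fixes conjg :: "'a \<Rightarrow> 'a"

instantiation real :: rcl
begin
definition conjg_real :: "real \<Rightarrow> real" where "conjg_real x = x"
instance ..
end

instantiation complex :: rcl
begin
definition conjg_complex :: "complex \<Rightarrow> complex" where "conjg_complex z = cnj z"
instance ..
end

definition cip :: "'a::rcl ^'n \<Rightarrow> 'a ^'n \<Rightarrow> 'a" where
  "cip x y = (\<Sum>i\<in>UNIV. conjg (x $ i) * y $ i)"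

definition adj :: "'a::rcl ^'n ^'m \<Rightarrow> 'a ^'m ^'n" where
  "adj M = (\<chi> i j. conjg (M $ j $ i))"

definition sa_posdef :: "'a::rcl ^'n ^'n \<Rightarrow> bool" where
  "sa_posdef R \<longleftrightarrow> adj R = R \<and>
     (\<forall>x. x \<noteq> 0 \<longrightarrow> (\<exists>c::real. c > 0 \<and> cip (R *v x) x = of_real c))"

definition ipU :: "'a::rcl ^'n ^'n \<Rightarrow> 'a ^'n \<Rightarrow> 'a ^'n \<Rightarrow> 'a" where
  "ipU R x y = cip (R *v x) y"

definition normU :: "'a::rcl ^'n ^'n \<Rightarrow> 'a ^'n \<Rightarrow> real" where
  "normU R x = sqrt (norm (ipU R x x))"

definition colspace :: "'a::rcl ^'r ^'n \<Rightarrow> ('a ^'n) set" where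
  "colspace B = range (\<lambda>c. B *v c)"

definition dual_norm_sk :: "'a::rcl ^'n ^'n \<Rightarrow> 'a ^'n ^'k \<Rightarrow> ('a ^'n) set \<Rightarrow> 'a ^'n \<Rightarrow> real" where
  "dual_norm_sk R Th Ur y =
     (SUP x \<in> Ur - {0}. norm (cip (Th *v (matrix_inv R *v y)) (Th *v x)) / norm (Th *v x))"

definition alpha_sk :: "'a::rcl ^'n ^'n \<Rightarrow> 'a ^'n ^'k \<Rightarrow> ('a ^'n) set \<Rightarrow> 'a ^'n ^'n \<Rightarrow> real" where
  "alpha_sk R Th Ur A = (INF x \<in> Ur - {0}. dual_norm_sk R Th Ur (A *v x) / normU R x)"

definition beta_sk :: "'a::rcl ^'n ^'n \<Rightarrow> 'a ^'n ^'k \<Rightarrow> ('a ^'n) set \<Rightarrow> 'a ^'n ^'n \<Rightarrow> 'a ^'n \<Rightarrow> real" where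
  "beta_sk R Th Ur A u =
     (SUP x \<in> {c *s u + y | c y. y \<in> Ur} - {0}. dual_norm_sk R Th Ur (A *v x) / normU R x)"

definition singular_values :: "'a::rcl ^'n ^'n \<Rightarrow> real set" where
  "singular_values M = {s. s \<ge> 0 \<and> (\<exists>v. v \<noteq> 0 \<and> (adj M ** M) *v v = of_real (s\<^sup>2) *s v)}"

definition smax :: "'a::rcl ^'n ^'n \<Rightarrow> real" where
  "smax M = Max (singular_values M)"

definition smin :: "'a::rcl ^'n ^'n \<Rightarrow> real" where
  "smin M = Min (singular_values M)"

definition red_mat :: "'a::rcl ^'n ^'n \<Rightarrow> 'a ^'n ^'k \<Rightarrow> 'a ^'r ^'n \<Rightarrow> 'a ^'n ^'n \<Rightarrow> 'a ^'r ^'r" where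
  "red_mat R Th Ub A = adj Ub ** adj Th ** Th ** matrix_inv R ** A ** Ub"

end

theory Submission
  imports Defs
begin

locale cjl =
  fixes T :: "'a::{rcl,euclidean_space} itself"
  assumes cadd: "\<And>x y::'a. conjg (x + y) = conjg x + conjg y"
    and cmul: "\<And>x y::'a. conjg (x * y) = conjg x * conjg y"
    and cinv: "\<And>x::'a. conjg (conjg x) = x"
    and creal: "\<And>r. conjg (of_real r :: 'a) = of_real r"
    and cnorm: "\<And>x::'a. conjg x * x = of_real ((norm x)^2)"
    and cnormc: "\<And>x::'a. norm (conjg x) = norm x"
begin

lemma c0[simp]: "conjg (0::'a) = 0" using creal[of 0] by simp
lemma c1[simp]: "conjg (1::'a) = 1" using creal[of 1] by simp
lemma cneg: "conjg (- x::'a) = - conjg x"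
  by (metis add_right_cancel c0 cadd neg_eq_iff_add_eq_0)
lemma cdiff: "conjg (x - y::'a) = conjg x - conjg y"
  using cadd[of "x-y" y] by (simp add: eq_diff_eq)
lemma csum: "conjg (\<Sum>i\<in>A. f i :: 'a) = (\<Sum>i\<in>A. conjg (f i))"
  by (induction A rule: infinite_finite_induct) (auto simp: cadd)

lemma cont_conjg: "continuous_on UNIV (conjg :: 'a \<Rightarrow> 'a)"
  unfolding continuous_on_iff
  by (metis cdiff cnormc dist_norm)

lemma cip_add_r: "cip x (y + z) = cip x y + cip x (z::'a^'n)"
  by (simp add: cip_def sum.distrib distrib_left)
lemma cip_add_l: "cip (x + y) z = cip x z + cip y (z::'a^'n)"
  by (simp add: cip_def sum.distrib distrib_right cadd)
lemma cip_diff_r: "cip x (y - z) = cip x y - cip x (z::'a^'n)"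
  by (simp add: cip_def sum_subtractf right_diff_distrib)
lemma cip_diff_l: "cip (x - y) z = cip x z - cip y (z::'a^'n)"
  by (simp add: cip_def sum_subtractf left_diff_distrib cdiff)
lemma cip_scale_r: "cip x (c *s y) = c * cip x (y::'a^'n)"
  by (simp add: cip_def sum_distrib_left mult_ac)
lemma cip_scale_l: "cip (c *s x) y = conjg c * cip x (y::'a^'n)"
  by (simp add: cip_def sum_distrib_left mult_ac cmul)
lemma cip_0_l[simp]: "cip 0 (y::'a^'n) = 0" by (simp add: cip_def)
lemma cip_0_r[simp]: "cip y (0::'a^'n) = 0" by (simp add: cip_def)
lemma cip_conj: "conjg (cip x y) = cip y (x::'a^'n)"
  by (simp add: cip_def csum cmul cinv mult.commute)
lemma cip_sum_r: "cip x (\<Sum>w\<in>S. f w) = (\<Sum>w\<in>S. cip x (f w::'a^'n))"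
  by (induction S rule: infinite_finite_induct) (auto simp: cip_add_r)

lemma norm_sq_vec: "(norm (x::'a^'n))^2 = (\<Sum>i\<in>UNIV. (norm (x$i))^2)"
  unfolding norm_vec_def L2_set_def by (simp add: sum_nonneg)

lemma cip_self: "cip x x = of_real ((norm (x::'a^'n))^2)"
  by (simp add: cip_def cnorm norm_sq_vec)

lemma cip_adj: "cip x (M *v y) = cip (adj M *v x) (y::'a^'n)"
proof -
  have "cip x (M *v y) = (\<Sum>i\<in>UNIV. \<Sum>j\<in>UNIV. conjg (x$i) * (M$i$j * y$j))"
    by (simp add: cip_def matrix_vector_mult_def sum_distrib_left)
  also have "\<dots> = (\<Sum>j\<in>UNIV. \<Sum>i\<in>UNIV. conjg (x$i) * (M$i$j * y$j))"
    by (rule sum.swap)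
  also have "\<dots> = (\<Sum>j\<in>UNIV. (\<Sum>i\<in>UNIV. conjg (x$i) * M$i$j) * y$j)"
    by (simp add: sum_distrib_right mult.assoc)
  also have "\<dots> = cip (adj M *v x) y"
    by (simp add: cip_def matrix_vector_mult_def adj_def csum cmul cinv mult.commute)
  finally show ?thesis .
qed

lemma adj_adj[simp]: "adj (adj M) = (M::'a^'n^'m)"
  by (simp add: adj_def cinv vec_eq_iff)

lemma adj_mult: "adj (A ** B) = adj B ** adj (A::'a^'n^'m)"
  by (simp add: adj_def matrix_matrix_mult_def vec_eq_iff csum cmul mult.commute)

lemma cip_adj2: "cip x (adj M *v y) = cip (M *v x) (y::'a^'n)"
  using cip_adj[of x "adj M" y] by simp

lemma cs: "norm (cip x y) \<le> norm x * norm (y::'a^'n)"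
proof -
  have "norm (cip x y) \<le> (\<Sum>i\<in>UNIV. norm (x$i) * norm (y$i))"
    unfolding cip_def by (rule order_trans[OF norm_sum]) (simp add: norm_mult cnormc)
  also have "\<dots> \<le> norm x * norm y"
    using L2_set_mult_ineq[of "\<lambda>i. norm (x$i)" "\<lambda>i. norm (y$i)" UNIV]
    by (simp add: norm_vec_def)
  finally show ?thesis .
qed

lemma mv_scale: "M *v (c *s x) = c *s (M *v (x::'a^'n))"
  by (simp add: vec_eq_iff matrix_vector_mult_def sum_distrib_left mult_ac)

lemma scaleR_vec: "r *\<^sub>R (x::'a^'n) = of_real r *s x"
proof -
  have "\<And>i. (r *\<^sub>R x)$i = (of_real r *s x)$i"
  proof -
    fix i
    have "(r *\<^sub>R x)$i = r *\<^sub>R (x$i)" by (rule vector_scaleR_component)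
    also have "\<dots> = of_real r * x$i" by (rule scaleR_conv_of_real)
    finally show "(r *\<^sub>R x)$i = (of_real r *s x)$i" by simp
  qed
  then show ?thesis by (simp add: vec_eq_iff del: vector_scaleR_component)
qed

lemma mv_bound: "norm (M *v x) \<le> (\<Sum>i\<in>UNIV. \<Sum>j\<in>UNIV. norm (M$i$j)) * norm (x::'a^'n)"
proof -
  have "norm (M *v x) \<le> (\<Sum>i\<in>UNIV. norm ((M *v x)$i))"
    unfolding norm_vec_def by (rule L2_set_le_sum) simp
  also have "\<dots> \<le> (\<Sum>i\<in>UNIV. \<Sum>j\<in>UNIV. norm (M$i$j) * norm x)"
  proof (rule sum_mono)
    fix i
    have "norm ((M *v x)$i) \<le> (\<Sum>j\<in>UNIV. norm (M$i$j * x$j))"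
      unfolding matrix_vector_mult_def by (simp add: norm_sum)
    also have "\<dots> \<le> (\<Sum>j\<in>UNIV. norm (M$i$j) * norm x)"
      by (rule sum_mono) (subst norm_mult, rule mult_left_mono, rule Finite_Cartesian_Product.norm_nth_le, rule norm_ge_zero)
    finally show "norm ((M *v x)$i) \<le> (\<Sum>j\<in>UNIV. norm (M$i$j) * norm x)" .
  qed
  finally show ?thesis by (simp add: sum_distrib_right)
qed

lemma mv_bl: "bounded_linear (\<lambda>x::'a^'n. M *v x)"
proof (rule bounded_linear_intro[where K="\<Sum>i\<in>UNIV. \<Sum>j\<in>UNIV. norm (M$i$j)"])
  show "\<And>x y. M *v (x + y) = M *v x + M *v y" by (rule matrix_vector_right_distrib)
  show "\<And>r x. M *v (r *\<^sub>R x) = r *\<^sub>R (M *v x)" by (simp only: scaleR_vec mv_scale)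
  show "\<And>x. norm (M *v x) \<le> norm x * (\<Sum>i\<in>UNIV. \<Sum>j\<in>UNIV. norm (M$i$j))"
    using mv_bound by (simp only: mult.commute)
qed

lemma adj_herm: "adj (adj M ** M) = adj M ** (M::'a^'n^'m)"
  by (simp add: adj_mult)

lemma cip_herm: "cip x ((adj M ** M) *v y) = cip ((adj M ** M) *v x) (y::'a^'n)"
  by (metis cip_adj adj_herm)

lemma cip_AtA: "cip v ((adj M ** M) *v v) = cip (M *v v) (M *v (v::'a^'n))"
  by (simp add: matrix_vector_mul_assoc[symmetric] cip_adj2)

lemma of_real_inj_a: "(of_real x :: 'a) = of_real y \<longleftrightarrow> x = y"
  by simp

lemma sv_ratio:
  assumes "s \<in> singular_values (M::'a^'n^'n)"
  shows "\<exists>v. v \<noteq> 0 \<and> norm (M *v v) = s * norm v"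
proof -
  obtain v where s0: "s \<ge> 0" and v: "v \<noteq> 0" "(adj M ** M) *v v = of_real (s^2) *s v"
    using assms unfolding singular_values_def by auto
  have "(of_real ((norm (M *v v))^2) :: 'a) = cip v ((adj M ** M) *v v)"
    by (simp add: cip_AtA cip_self)
  also have "\<dots> = of_real (s^2 * (norm v)^2)"
    using v by (simp add: cip_scale_r cip_self)
  finally have "(norm (M *v v))^2 = (s * norm v)^2"
    by (simp only: of_real_inj_a power_mult_distrib)
  then have "norm (M *v v) = s * norm v"
    using s0 by (simp add: power2_eq_iff_nonneg)
  with v show ?thesis by blast
qed

lemma sv_orth:
  assumes "(adj M ** M) *v v = of_real a *s v" "(adj M ** M) *v w = of_real b *s (w::'a^'n)" "a \<noteq> b"
  shows "cip v w = 0"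
proof -
  have "of_real b * cip v w = of_real a * cip v w"
    using cip_herm[of v M w] assms by (simp add: cip_scale_r cip_scale_l creal)
  then have "(of_real b - of_real a) * cip v w = 0" by (simp add: algebra_simps)
  with assms(3) show ?thesis by simp
qed

lemma sv_finite: "finite (singular_values (M::'a^'n^'n))"
proof -
  define S where "S = singular_values M"
  define ev where "ev s = (SOME v. v \<noteq> 0 \<and> (adj M ** M) *v v = of_real (s^2) *s v)" for s
  have ev: "ev s \<noteq> 0 \<and> (adj M ** M) *v ev s = of_real (s^2) *s ev s" if "s \<in> S" for s
  proof -
    have "\<exists>v. v \<noteq> 0 \<and> (adj M ** M) *v v = of_real (s^2) *s v"
      using that unfolding S_def singular_values_def by auto
    then show ?thesis unfolding ev_def by (rule someI_ex)
  qed
  have nn: "s \<ge> 0" if "s \<in> S" for s using that unfolding S_def singular_values_def by auto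
  have sq: "s = t" if "s \<in> S" "t \<in> S" "s^2 = t^2" for s t
    using nn[OF that(1)] nn[OF that(2)] that(3) by (simp add: power2_eq_iff_nonneg)
  have inj: "inj_on ev S"
  proof (rule inj_onI)
    fix s t assume st: "s \<in> S" "t \<in> S" "ev s = ev t"
    have "of_real (s^2) *s ev s = of_real (t^2) *s ev s"
      using ev[OF st(1)] ev[OF st(2)] st(3) by simp
    then have "(of_real (s^2)::'a) = of_real (t^2)" using ev[OF st(1)] by (simp del: of_real_power)
    then have "s^2 = t^2" by (simp only: of_real_inj_a)
    then show "s = t" using sq st by blast
  qed
  have orth: "cip v w = 0" if vw: "v \<in> ev ` S" "w \<in> ev ` S" "v \<noteq> w" for v w
  proof -
    obtain s where s: "s \<in> S" "v = ev s" using vw(1) by blast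
    obtain t where t: "t \<in> S" "w = ev t" using vw(2) by blast
    note st = s(1) t(1) s(2) t(2)
    have "s \<noteq> t" using st vw(3) by auto
    then have "s^2 \<noteq> t^2" using sq st by blast
    then show ?thesis using sv_orth ev[OF st(1)] ev[OF st(2)] st by blast
  qed
  have nz: "v \<noteq> 0" if "v \<in> ev ` S" for v using that ev by auto
  have "vec.independent (ev ` S)"
    unfolding vec.independent_explicit_finite_subsets
  proof (intro allI impI ballI)
    fix T u v
    assume T: "T \<subseteq> ev ` S" "finite T" and sum0: "(\<Sum>w\<in>T. u w *s w) = 0" and vT: "v \<in> T"
    have "0 = cip v (\<Sum>w\<in>T. u w *s w)" using sum0 by simp
    also have "\<dots> = (\<Sum>w\<in>T. u w * cip v w)" by (simp add: cip_sum_r cip_scale_r)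
    also have "\<dots> = u v * cip v v + (\<Sum>w\<in>T - {v}. u w * cip v w)"
      using T vT by (simp add: sum.remove)
    also have "(\<Sum>w\<in>T - {v}. u w * cip v w) = 0"
      using T vT orth by (intro sum.neutral) (metis DiffE insertCI mult_zero_right subsetD)
    finally have "u v * of_real ((norm v)^2) = 0" by (simp add: cip_self)
    moreover have "v \<noteq> 0" using nz T vT by auto
    ultimately show "u v = 0" by simp
  qed
  then have "finite (ev ` S)" by (rule vec.finiteI_independent)
  then show ?thesis using inj finite_image_iff S_def by blast
qed

lemma mv_scaleR: "M *v (r *\<^sub>R x) = r *\<^sub>R (M *v (x::'a^'n))"
  by (simp only: scaleR_vec mv_scale)

lemma sv_nonempty: "singular_values (M::'a^'n^'n) \<noteq> {}"
proof -
  define f where "f a = (norm (M *v a))^2" for a :: "'a^'n"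
  define B where "B = adj M ** M"
  have cont: "continuous_on (sphere 0 1) f"
    unfolding f_def
    by (intro continuous_intros linear_continuous_on mv_bl)
  have "sphere (0::'a^'n) 1 \<noteq> {}" by simp
  then obtain a0 where a0: "a0 \<in> sphere 0 1" and amax: "\<And>y. y \<in> sphere 0 1 \<Longrightarrow> f y \<le> f a0"
    using continuous_attains_sup[OF compact_sphere _ cont] by blast
  define M0 where "M0 = f a0"
  have na0: "norm a0 = 1" using a0 by simp
  have M0: "M0 \<ge> 0" unfolding M0_def f_def by simp
  have bnd: "(norm (M *v w))^2 \<le> M0 * (norm w)^2" for w
  proof (cases "w = 0")
    case True then show ?thesis by simp
  next
    case False
    define w1 where "w1 = (1 / norm w) *\<^sub>R w"
    have w1: "w1 \<in> sphere 0 1" using False by (simp add: w1_def)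
    have ww: "w = norm w *\<^sub>R w1" using False by (simp add: w1_def)
    have "M *v w = norm w *\<^sub>R (M *v w1)" by (subst ww) (rule mv_scaleR)
    then have "(norm (M *v w))^2 = (norm w)^2 * f w1" by (simp add: f_def power_mult_distrib)
    also have "\<dots> \<le> (norm w)^2 * M0" using amax[OF w1] M0_def by (simp add: mult_left_mono)
    finally show ?thesis by (simp add: mult.commute)
  qed
  define C where "C w = of_real M0 *s w - B *v w" for w
  have E: "of_real (M0 * (norm w)^2 - (norm (M *v w))^2) = cip w (C w)" for w
    by (simp add: C_def cip_diff_r cip_scale_r cip_self B_def cip_AtA)
  have herm: "cip x (C y) = cip (C x) y" for x y
    by (simp add: C_def cip_diff_r cip_diff_l cip_scale_r cip_scale_l creal B_def cip_herm)
  have Clin: "C (x + c *s y) = C x + c *s C y" for x y c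
    by (simp add: C_def matrix_vector_right_distrib mv_scale vector_add_ldistrib vector_ssub_ldistrib
        vector_smult_assoc mult.commute algebra_simps)
  define g where "g = C a0"
  define G where "G = (norm g)^2"
  define P where "P = M0 * (norm g)^2 - (norm (M *v g))^2"
  have P0: "P \<ge> 0" using bnd[of g] by (simp add: P_def)
  have ca0: "cip a0 g = 0"
    using E[of a0] na0 by (simp add: g_def M0_def f_def)
  have key: "0 \<le> 2 * t * G + t^2 * P" for t
  proof -
    define w where "w = a0 + of_real t *s g"
    have Cw: "C w = g + of_real t *s C g" by (simp add: w_def Clin g_def)
    have "cip w (C w) = cip a0 g + of_real t * cip a0 (C g) + of_real t * cip g g
        + of_real t * of_real t * cip g (C g)"
      unfolding Cw by (simp add: w_def cip_add_l cip_add_r cip_scale_l cip_scale_r creal algebra_simps)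
    also have "cip a0 (C g) = cip g g" by (simp add: herm g_def)
    also have "cip g (C g) = of_real P" using E[of g] by (simp add: P_def)
    finally have "cip w (C w) = of_real (2 * t * G + t^2 * P)"
      by (simp add: ca0 cip_self G_def algebra_simps power2_eq_square)
    then have "(of_real (M0 * (norm w)^2 - (norm (M *v w))^2)::'a) = of_real (2 * t * G + t^2 * P)"
      using E[of w] by simp
    then have "M0 * (norm w)^2 - (norm (M *v w))^2 = 2 * t * G + t^2 * P"
      by (simp only: of_real_inj_a)
    then show ?thesis using bnd[of w] by simp
  qed
  have "G = 0"
  proof (rule ccontr)
    assume "G \<noteq> 0"
    then have G0: "G > 0" unfolding G_def by simp
    define t where "t = - G / (P + 1)"
    have pt: "(P + 1) * t = - G" using P0 by (simp add: t_def)
    have "0 \<le> (P + 1)^2 * (2 * t * G + t^2 * P)" using key[of t] by simp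
    also have "(P + 1)^2 * (2 * t * G + t^2 * P) = 2 * G * (P + 1) * ((P + 1) * t) + ((P + 1) * t)^2 * P"
      by (simp add: power2_eq_square algebra_simps)
    also have "\<dots> = - (G^2 * (P + 2))" unfolding pt by (simp add: power2_eq_square algebra_simps)
    also have "\<dots> < 0" using G0 P0 by simp
    finally show False by simp
  qed
  then have "g = 0" unfolding G_def by simp
  then have "B *v a0 = of_real M0 *s a0" unfolding g_def C_def by simp
  moreover have "a0 \<noteq> 0" using na0 by auto
  moreover have "(sqrt M0)^2 = M0" using M0 by simp
  ultimately have "sqrt M0 \<in> singular_values M"
    unfolding singular_values_def B_def by (metis (mono_tags, lifting) mem_Collect_eq real_sqrt_ge_zero M0)
  then show ?thesis by blast
qed

lemma cont_conjg_comp[continuous_intros]: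
  "continuous_on S f \<Longrightarrow> continuous_on S (\<lambda>x. conjg (f x :: 'a))"
  using continuous_on_compose2[OF cont_conjg] by blast

lemma ipU_pos:
  assumes "sa_posdef R" "x \<noteq> 0"
  shows "\<exists>c>0. ipU R x (x::'a^'n) = of_real c"
  using assms unfolding sa_posdef_def ipU_def by blast

lemma ipU_self:
  assumes "sa_posdef R"
  shows "ipU R x (x::'a^'n) = of_real ((normU R x)^2)"
proof (cases "x = 0")
  case True then show ?thesis by (simp add: ipU_def normU_def)
next
  case False
  then obtain c where c: "c > 0" "ipU R x x = of_real c" using ipU_pos assms by blast
  then show ?thesis by (simp add: normU_def)
qed

lemma normU_pos:
  assumes "sa_posdef R" "x \<noteq> 0"
  shows "normU R (x::'a^'n) > 0"
proof -
  obtain c where c: "c > 0" "ipU R x x = of_real c" using ipU_pos assms by blast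
  then show ?thesis by (simp add: normU_def)
qed

lemma normU_lower:
  assumes "sa_posdef (R::'a^'n^'n)"
  shows "\<exists>c0>0. \<forall>x. c0 * norm x \<le> normU R x"
proof -
  define g where "g x = norm (ipU R x x)" for x :: "'a^'n"
  have cont: "continuous_on (sphere 0 1) g"
    unfolding g_def ipU_def cip_def
    by (intro continuous_intros continuous_on_component linear_continuous_on mv_bl)
  have "sphere (0::'a^'n) 1 \<noteq> {}" by simp
  then obtain x0 where x0: "x0 \<in> sphere 0 1" and xmin: "\<And>y. y \<in> sphere 0 1 \<Longrightarrow> g x0 \<le> g y"
    using continuous_attains_inf[OF compact_sphere _ cont] by blast
  have "x0 \<noteq> 0" using x0 by auto
  then obtain c where c: "c > 0" "ipU R x0 x0 = of_real c" using ipU_pos assms by blast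
  define m where "m = g x0"
  have m: "m > 0" using c by (simp add: m_def g_def)
  have "sqrt m * norm x \<le> normU R x" for x
  proof (cases "x = 0")
    case True then show ?thesis by (simp add: normU_def ipU_def)
  next
    case False
    define x1 where "x1 = (1 / norm x) *\<^sub>R x"
    have x1: "x1 \<in> sphere 0 1" using False by (simp add: x1_def)
    have xx: "x = norm x *\<^sub>R x1" using False by (simp add: x1_def)
    have "ipU R x x = of_real (norm x) * of_real (norm x) * ipU R x1 x1"
      by (subst (1 2) xx) (simp only: ipU_def scaleR_vec mv_scale cip_scale_l cip_scale_r creal mult.assoc)
    then have "g x = (norm x)^2 * g x1"
      by (simp add: g_def norm_mult power2_eq_square)
    also have "\<dots> \<ge> (norm x)^2 * m" using xmin[OF x1] by (simp add: m_def mult_left_mono)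
    finally have "(norm x)^2 * m \<le> g x" .
    then have "sqrt ((norm x)^2 * m) \<le> sqrt (g x)" by (rule real_sqrt_le_mono)
    then show ?thesis by (simp add: real_sqrt_mult normU_def g_def mult.commute)
  qed
  then show ?thesis using m by (intro exI[of _ "sqrt m"]) auto
qed

lemma main:
  fixes R A :: "'a^'n^'n" and u :: "'a^'n" and Ub :: "'a^'r^'n" and Th :: "'a^'n^'k" and \<epsilon> :: real
  assumes posdef: "sa_posdef R" and inj: "\<forall>c. Ub *v c = 0 \<longrightarrow> c = 0"
    and e0: "0 \<le> \<epsilon>" and e1: "\<epsilon> < 1"
    and eps: "\<forall>x\<in>colspace Ub. \<forall>y\<in>colspace Ub.
          norm (ipU R x y - cip (Th *v x) (Th *v y)) \<le> \<epsilon> * normU R x * normU R y"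
    and orthQ: "adj (Th ** Ub) ** (Th ** Ub) = mat 1"
  shows "smax (red_mat R Th Ub A) * alpha_sk R Th (colspace Ub) A
          \<le> sqrt ((1 + \<epsilon>) / (1 - \<epsilon>)) * beta_sk R Th (colspace Ub) A u * smin (red_mat R Th Ub A)"
proof -
  define Q where "Q = Th ** Ub"
  define Ri where "Ri = matrix_inv R"
  define Ar where "Ar = red_mat R Th Ub A"
  define Ur where "Ur = colspace Ub"
  have normQ: "norm (Q *v a) = norm a" for a
  proof -
    have "cip (Q *v a) (Q *v a) = cip a a"
      using orthQ by (simp add: cip_adj2[symmetric] matrix_vector_mul_assoc Q_def)
    then have "(of_real ((norm (Q *v a))^2)::'a) = of_real ((norm a)^2)" by (simp add: cip_self)
    then have "(norm (Q *v a))^2 = (norm a)^2" by (simp only: of_real_inj_a)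
    then show ?thesis by (simp add: power2_eq_iff_nonneg)
  qed
  have ThUb: "Th *v (Ub *v a) = Q *v a" for a by (simp add: Q_def matrix_vector_mul_assoc)
  have Ub0: "Ub *v a \<noteq> 0" if "a \<noteq> 0" for a using inj that by blast
  have ex_nz: "\<exists>a::'a^'r. a \<noteq> 0" by (metis vector_smult_lzero vector_smult_lid zero_neq_one vector_mul_rcancel)
  have dual: "dual_norm_sk R Th Ur y = norm (adj Q *v (Th *v (Ri *v y)))" for y
  proof -
    define z where "z = Th *v (Ri *v y)"
    define w where "w = adj Q *v z"
    have val: "norm (cip (Th *v (Ri *v y)) (Th *v x)) / norm (Th *v x) = norm (cip w a) / norm a"
      if "x = Ub *v a" for x a
      using that by (simp add: ThUb normQ z_def[symmetric] w_def cip_adj)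
    have le: "norm (cip w a) / norm a \<le> norm w" for a
      using cs[of w a] by (cases "a = 0") (auto simp: divide_le_eq)
    have bnd: "\<forall>x\<in>Ur - {0}. norm (cip (Th *v (Ri *v y)) (Th *v x)) / norm (Th *v x) \<le> norm w"
      using val le unfolding Ur_def colspace_def by auto
    have ne: "Ur - {0} \<noteq> {}"
      using ex_nz Ub0 unfolding Ur_def colspace_def by blast
    have "dual_norm_sk R Th Ur y \<le> norm w"
      unfolding dual_norm_sk_def Ri_def[symmetric] using bnd ne by (intro cSUP_least) auto
    moreover have "norm w \<le> dual_norm_sk R Th Ur y"
    proof -
      obtain a where a: "a \<noteq> 0" "(w = 0 \<or> a = w)"
        using ex_nz by blast
      have x: "Ub *v a \<in> Ur - {0}" using a Ub0 unfolding Ur_def colspace_def by auto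
      have "norm w \<le> norm (cip w a) / norm a"
        using a by (auto simp: cip_self norm_power power2_eq_square norm_mult)
      also have "\<dots> = norm (cip (Th *v (Ri *v y)) (Th *v (Ub *v a))) / norm (Th *v (Ub *v a))"
        using val by simp
      also have "\<dots> \<le> dual_norm_sk R Th Ur y"
        unfolding dual_norm_sk_def Ri_def[symmetric]
        using bnd x by (intro cSUP_upper) (auto intro: bdd_aboveI2)
      finally show ?thesis .
    qed
    ultimately show ?thesis by (simp add: w_def z_def)
  qed
  have Ar_eq: "Ar *v a = adj Q *v (Th *v (Ri *v (A *v (Ub *v a))))" for a
    by (simp add: Ar_def red_mat_def Ri_def Q_def adj_mult matrix_vector_mul_assoc matrix_mul_assoc)
  have dualA: "dual_norm_sk R Th Ur (A *v (Ub *v a)) = norm (Ar *v a)" for a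
    by (simp add: dual Ar_eq)
  have nn: "normU R (Ub *v a) > 0" if "a \<noteq> 0" for a
    using normU_pos[OF posdef Ub0[OF that]] .
  have epsa: "\<bar>(normU R (Ub *v a))^2 - (norm a)^2\<bar> \<le> \<epsilon> * (normU R (Ub *v a))^2" for a
  proof -
    have x: "Ub *v a \<in> colspace Ub" unfolding colspace_def by auto
    have "norm (ipU R (Ub *v a) (Ub *v a) - cip (Th *v (Ub *v a)) (Th *v (Ub *v a)))
        \<le> \<epsilon> * normU R (Ub *v a) * normU R (Ub *v a)" using eps x by blast
    moreover have "ipU R (Ub *v a) (Ub *v a) - cip (Th *v (Ub *v a)) (Th *v (Ub *v a))
        = of_real ((normU R (Ub *v a))^2 - (norm a)^2)"
      by (simp add: ipU_self[OF posdef] ThUb cip_self normQ)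
    ultimately have "norm (of_real ((normU R (Ub *v a))^2 - (norm a)^2) :: 'a)
        \<le> \<epsilon> * normU R (Ub *v a) * normU R (Ub *v a)" by metis
    then show ?thesis by (simp only: norm_of_real power2_eq_square mult.assoc)
  qed
  have up: "norm a \<le> sqrt (1 + \<epsilon>) * normU R (Ub *v a)" for a
  proof -
    have "(norm a)^2 \<le> (1 + \<epsilon>) * (normU R (Ub *v a))^2" using epsa[of a] by (simp add: algebra_simps abs_le_iff)
    then have "sqrt ((norm a)^2) \<le> sqrt ((1 + \<epsilon>) * (normU R (Ub *v a))^2)" by (rule real_sqrt_le_mono)
    then show ?thesis by (simp add: real_sqrt_mult normU_def)
  qed
  have lo: "sqrt (1 - \<epsilon>) * normU R (Ub *v a) \<le> norm a" for a
  proof -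
    have "(1 - \<epsilon>) * (normU R (Ub *v a))^2 \<le> (norm a)^2" using epsa[of a] by (simp add: algebra_simps abs_le_iff)
    then have "sqrt ((1 - \<epsilon>) * (normU R (Ub *v a))^2) \<le> sqrt ((norm a)^2)" by (rule real_sqrt_le_mono)
    then show ?thesis by (simp add: real_sqrt_mult normU_def)
  qed
  define \<alpha> where "\<alpha> = alpha_sk R Th Ur A"
  define \<beta> where "\<beta> = beta_sk R Th Ur A u"
  have ne: "Ur - {0} \<noteq> {}"
    using ex_nz Ub0 unfolding Ur_def colspace_def by blast
  have dnn: "dual_norm_sk R Th Ur y \<ge> 0" for y by (simp add: dual)
  have alpha0: "\<alpha> \<ge> 0"
    unfolding \<alpha>_def alpha_sk_def using ne dnn
    by (intro cINF_greatest) (auto simp: normU_def)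
  have alpha_le: "\<alpha> \<le> sqrt (1 + \<epsilon>) * (norm (Ar *v a) / norm a)" if "a \<noteq> 0" for a
  proof -
    have x: "Ub *v a \<in> Ur - {0}" using Ub0[OF that] unfolding Ur_def colspace_def by auto
    have "\<alpha> \<le> dual_norm_sk R Th Ur (A *v (Ub *v a)) / normU R (Ub *v a)"
      unfolding \<alpha>_def alpha_sk_def using x dnn
      by (intro cINF_lower) (auto intro!: bdd_belowI2[where m=0] simp: normU_def)
    also have "\<dots> = norm (Ar *v a) / normU R (Ub *v a)" by (simp add: dualA)
    also have "\<dots> \<le> sqrt (1 + \<epsilon>) * (norm (Ar *v a) / norm a)"
      using mult_right_mono[OF up[of a], of "norm (Ar *v a)"] nn[OF that] that
      by (simp add: field_simps mult_ac)
    finally show ?thesis .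
  qed
  obtain c0 where c0: "c0 > 0" "\<And>x. c0 * norm x \<le> normU R x" using normU_lower[OF posdef] by blast
  define N where "N = adj Q ** Th ** Ri ** A"
  define K where "K = (\<Sum>i\<in>UNIV. \<Sum>j\<in>UNIV. norm (N$i$j))"
  have dualN: "dual_norm_sk R Th Ur (A *v x) = norm (N *v x)" for x
    by (simp add: dual N_def matrix_vector_mul_assoc matrix_mul_assoc)
  have K0: "K \<ge> 0" unfolding K_def by (intro sum_nonneg) auto
  have rbnd: "dual_norm_sk R Th Ur (A *v x) / normU R x \<le> K / c0" for x
  proof (cases "x = 0")
    case True then show ?thesis using K0 c0 by (simp add: normU_def ipU_def)
  next
    case False
    have np: "normU R x > 0" using normU_pos[OF posdef False] .
    have "dual_norm_sk R Th Ur (A *v x) * c0 \<le> K * norm x * c0"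
      using mv_bound[of N x] c0 by (simp add: dualN K_def)
    also have "\<dots> \<le> K * normU R x" using c0(2)[of x] K0 by (simp add: mult_left_mono mult.commute mult.left_commute)
    finally show ?thesis using np c0 by (simp add: divide_le_eq field_simps)
  qed
  have beta_ge: "\<beta> \<ge> sqrt (1 - \<epsilon>) * (norm (Ar *v b) / norm b)" if "b \<noteq> 0" for b
  proof -
    have x: "Ub *v b \<in> {c *s u + y | c y. y \<in> Ur} - {0}"
    proof -
      have "Ub *v b = 0 *s u + Ub *v b" by simp
      moreover have "Ub *v b \<in> Ur" unfolding Ur_def colspace_def by auto
      ultimately show ?thesis using Ub0[OF that] by blast
    qed
    have "sqrt (1 - \<epsilon>) * (norm (Ar *v b) / norm b) \<le> norm (Ar *v b) / normU R (Ub *v b)"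
      using mult_right_mono[OF lo[of b], of "norm (Ar *v b)"] nn[OF that] that
      by (simp add: field_simps mult_ac)
    also have "\<dots> = dual_norm_sk R Th Ur (A *v (Ub *v b)) / normU R (Ub *v b)" by (simp add: dualA)
    also have "\<dots> \<le> \<beta>"
      unfolding \<beta>_def beta_sk_def using x rbnd
      by (intro cSUP_upper) (auto intro!: bdd_aboveI2)
    finally show ?thesis .
  qed
  have fin: "finite (singular_values Ar)" by (rule sv_finite)
  have sne: "singular_values Ar \<noteq> {}" by (rule sv_nonempty)
  have smin_in: "smin Ar \<in> singular_values Ar" unfolding smin_def using fin sne by (rule Min_in)
  have smax_in: "smax Ar \<in> singular_values Ar" unfolding smax_def using fin sne by (rule Max_in)
  have smin0: "smin Ar \<ge> 0" using smin_in unfolding singular_values_def by auto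
  have smax0: "smax Ar \<ge> 0" using smax_in unfolding singular_values_def by auto
  obtain a where a: "a \<noteq> 0" "norm (Ar *v a) = smin Ar * norm a" using sv_ratio[OF smin_in] by blast
  obtain b where b: "b \<noteq> 0" "norm (Ar *v b) = smax Ar * norm b" using sv_ratio[OF smax_in] by blast
  have al: "\<alpha> \<le> sqrt (1 + \<epsilon>) * smin Ar" using alpha_le[OF a(1)] a by simp
  have be: "sqrt (1 - \<epsilon>) * smax Ar \<le> \<beta>" using beta_ge[OF b(1)] b by simp
  have sq: "sqrt ((1 + \<epsilon>) / (1 - \<epsilon>)) * sqrt (1 - \<epsilon>) = sqrt (1 + \<epsilon>)"
    using e1 by (simp add: real_sqrt_divide)
  have "smax Ar * \<alpha> \<le> smax Ar * (sqrt (1 + \<epsilon>) * smin Ar)"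
    using al smax0 by (rule mult_left_mono)
  also have "\<dots> = sqrt ((1 + \<epsilon>) / (1 - \<epsilon>)) * (sqrt (1 - \<epsilon>) * smax Ar) * smin Ar"
    by (simp add: sq[symmetric] mult_ac)
  also have "\<dots> \<le> sqrt ((1 + \<epsilon>) / (1 - \<epsilon>)) * \<beta> * smin Ar"
    using be smin0 e0 e1 by (intro mult_right_mono mult_left_mono) auto
  finally show ?thesis by (simp add: Ar_def \<alpha>_def \<beta>_def Ur_def)
qed

end

interpretation Rl: cjl "TYPE(real)"
  by unfold_locales (simp_all add: conjg_real_def power2_eq_square)

interpretation Cx: cjl "TYPE(complex)"
proof unfold_locales
  fix x :: complex
  show "conjg x * x = of_real ((norm x)^2)"
    by (metis complex_norm_square mult.commute of_real_power conjg_complex_def)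
qed (simp_all add: conjg_complex_def)

theorem proposition4p3:
  shows
  "(\<forall>(R::real^'n^'n) (A::real^'n^'n) (u::real^'n) (Ub::real^'r^'n) (Th::real^'n^'k) (\<epsilon>::real).
      sa_posdef R \<and> (\<forall>c. Ub *v c = 0 \<longrightarrow> c = 0) \<and> 0 \<le> \<epsilon> \<and> \<epsilon> < 1 \<and>
      (\<forall>x\<in>colspace Ub. \<forall>y\<in>colspace Ub.
          norm (ipU R x y - cip (Th *v x) (Th *v y)) \<le> \<epsilon> * normU R x * normU R y) \<and>
      adj (Th ** Ub) ** (Th ** Ub) = mat 1
      \<longrightarrow> smax (red_mat R Th Ub A) * alpha_sk R Th (colspace Ub) A
          \<le> sqrt ((1 + \<epsilon>) / (1 - \<epsilon>)) * beta_sk R Th (colspace Ub) A u * smin (red_mat R Th Ub A))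
   \<and>
   (\<forall>(R::complex^'n^'n) (A::complex^'n^'n) (u::complex^'n) (Ub::complex^'r^'n) (Th::complex^'n^'k) (\<epsilon>::real).
      sa_posdef R \<and> (\<forall>c. Ub *v c = 0 \<longrightarrow> c = 0) \<and> 0 \<le> \<epsilon> \<and> \<epsilon> < 1 \<and>
      (\<forall>x\<in>colspace Ub. \<forall>y\<in>colspace Ub.
          norm (ipU R x y - cip (Th *v x) (Th *v y)) \<le> \<epsilon> * normU R x * normU R y) \<and>
      adj (Th ** Ub) ** (Th ** Ub) = mat 1
      \<longrightarrow> smax (red_mat R Th Ub A) * alpha_sk R Th (colspace Ub) A
          \<le> sqrt ((1 + \<epsilon>) / (1 - \<epsilon>)) * beta_sk R Th (colspace Ub) A u * smin (red_mat R Th Ub A))"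
  apply (intro conjI allI impI)
   apply (elim conjE, rule Rl.main; assumption)
  apply (elim conjE, rule Cx.main; assumption)
  done

end
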